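(* Let $F$ be a closed convex subset of a real Hilbert space $\mathcal H$ and let $(T_n)_{n\ge0}$ be an $F$-coherent sequence in $\mathcal U_F$. Then: (i) If $F\neq\emptyset$, then for every $\varepsilon\in(0,1]$ and every $x_0\in\mathcal H$, the sequence $x_{n+1}=x_n+(2-\varepsilon)(T_nx_n-x_n)$ converges weakly to a point of $F$. (ii) For $x_0\in\mathcal H$, consider the iteration $x_{n+1}=Q(x_0,x_n,T_nx_n)$, which terminates at step $n$ if $H(x_0,x_n)\cap H(x_n,T_nx_n)=\emptyset$. Exactly one of the following holds: (a) $F\neq\emptyset$ and $x_n\to P_Fx_0$ strongly; (b) $F=\emptyset$ and $\|x_n\|\to+\infty$; (c) $F=\emptyset$ and the iteration terminates.
   Context: For $x,y\in\mathcal H$, $H(x,y)=\{z\in\mathcal H:\ \langle z-y,x-y\rangle\le0\}$; $Q(x,y,z)$ is the metric projection of $x$ onto $H(x,y)\cap H(y,z)$. $\mathcal U_F$ is the set of maps $T:\mathcal H\to\mathcal H$ with $F\subset H(x,Tx)$ for every $x\in\mathcal H$. A sequence $(T_n)\subset\mathcal U_F$ is $F$-coherent if for every bounded sequence $(z_n)$ in $\mathcal H$ with $\sum_n\|z_{n+1}-z_n\|^2<\infty$ and $\sum_n\|z_n-T_nz_n\|^2<\infty$, every weak cluster point of $(z_n)$ lies in $F$. $P_F$ is the metric projection onto $F$. *)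

theory Defs
  imports "HOL-Analysis.Analysis"
begin

definition halfsp :: "'a::real_inner \<Rightarrow> 'a \<Rightarrow> 'a set" where
  "halfsp x y = {z. inner (z - y) (x - y) \<le> 0}"

text \<open>Metric projection of x onto S (the unique nearest point; used for closed convex nonempty S).\<close>
definition proj :: "'a::real_normed_vector set \<Rightarrow> 'a \<Rightarrow> 'a" where
  "proj S x = (THE p. p \<in> S \<and> (\<forall>y\<in>S. norm (x - p) \<le> norm (x - y)))"

definition Qmap :: "'a::real_inner \<Rightarrow> 'a \<Rightarrow> 'a \<Rightarrow> 'a" where
  "Qmap x y z = proj (halfsp x y \<inter> halfsp y z) x"

definition UF :: "'a::real_inner set \<Rightarrow> ('a \<Rightarrow> 'a) set" where
  "UF F = {T. \<forall>x. F \<subseteq> halfsp x (T x)}"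

definition weak_conv :: "(nat \<Rightarrow> 'a::real_inner) \<Rightarrow> 'a \<Rightarrow> bool" where
  "weak_conv u p \<longleftrightarrow> (\<forall>y. (\<lambda>n. inner (u n) y) \<longlonglongrightarrow> inner p y)"

definition weak_cluster_point :: "(nat \<Rightarrow> 'a::real_inner) \<Rightarrow> 'a \<Rightarrow> bool" where
  "weak_cluster_point u p \<longleftrightarrow> (\<exists>r. strict_mono r \<and> weak_conv (u \<circ> r) p)"

definition coherent :: "'a::real_inner set \<Rightarrow> (nat \<Rightarrow> 'a \<Rightarrow> 'a) \<Rightarrow> bool" where
  "coherent F T \<longleftrightarrow> (\<forall>n. T n \<in> UF F) \<and>
     (\<forall>z. bounded (range z) \<and> summable (\<lambda>n. (norm (z (Suc n) - z n))\<^sup>2)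
          \<and> summable (\<lambda>n. (norm (z n - T n (z n)))\<^sup>2)
          \<longrightarrow> (\<forall>p. weak_cluster_point z p \<longrightarrow> p \<in> F))"

end

theory Submission
  imports Defs "HOL-Library.Diagonal_Subsequence"
begin


lemma parallelogram:
  fixes a b :: "'a::real_inner"
  shows "(norm (a - b))^2 = 2*(norm a)^2 + 2*(norm b)^2 - 4*(norm ((1/2) *\<^sub>R (a + b)))^2"
  by (simp add: power2_norm_eq_inner inner_diff_left inner_diff_right inner_add_left inner_add_right inner_commute algebra_simps)

lemma proj_exists:
  fixes S :: "'a::{real_inner,complete_space} set"
  assumes "closed S" "convex S" "S \<noteq> {}"
  shows "\<exists>p\<in>S. \<forall>y\<in>S. norm (x - p) \<le> norm (x - y)"
proof -
  define d where "d = infdist x S"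
  have d0: "d \<ge> 0" unfolding d_def by (rule infdist_nonneg)
  have dle: "d \<le> norm (x - y)" if "y \<in> S" for y
    using infdist_le[OF that, of x] by (simp add: d_def dist_norm)
  have "\<exists>y\<in>S. (norm (x - y))^2 < d^2 + 1/(Suc n)" for n
  proof -
    have "sqrt (d^2) < sqrt (d^2 + 1/(Suc n))" by (intro real_sqrt_less_mono) simp
    hence lt: "d < sqrt (d^2 + 1/(Suc n))" using d0 by simp
    have "infdist x S = (INF a\<in>S. dist x a)" using assms(3) by (simp add: infdist_def)
    then obtain y where "y \<in> S" "dist x y < sqrt (d^2 + 1/(Suc n))"
      using lt unfolding d_def by (metis assms(3) bdd_below_image_dist cINF_less_iff)
    then have "(dist x y)^2 < (sqrt (d^2 + 1/(Suc n)))^2"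
      by (intro power_strict_mono) auto
    then have "(norm (x - y))^2 < d^2 + 1/(Suc n)" by (simp add: dist_norm)
    with \<open>y \<in> S\<close> show ?thesis by blast
  qed
  then obtain y where yS: "\<And>n. y n \<in> S" and yd: "\<And>n. (norm (x - y n))^2 < d^2 + 1/(Suc n)"
    by metis
  have cb: "(norm (y n - y m))^2 \<le> 2/(Suc n) + 2/(Suc m)" for n m
  proof -
    have mid: "(1/2) *\<^sub>R (y n + y m) \<in> S"
      using convexD[OF assms(2) yS[of n] yS[of m], of "1/2" "1/2"] by (simp add: scaleR_add_right)
    have "d \<le> norm (x - (1/2) *\<^sub>R (y n + y m))" by (rule dle[OF mid])
    hence "d^2 \<le> (norm (x - (1/2) *\<^sub>R (y n + y m)))^2" using d0 by (simp add: power_mono)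
    moreover have "x - (1/2) *\<^sub>R (y n + y m) = (1/2) *\<^sub>R ((x - y n) + (x - y m))"
      by (simp add: algebra_simps flip: scaleR_add_left)
    moreover have "y n - y m = (x - y m) - (x - y n)" by simp
    ultimately show ?thesis
      using parallelogram[of "x - y m" "x - y n"] yd[of n] yd[of m]
      by (simp add: add.commute)
  qed
  have "Cauchy y"
  proof (rule metric_CauchyI)
    fix e :: real assume e: "e > 0"
    obtain N :: nat where N: "4 / e^2 < N"
      using reals_Archimedean2 by blast
    show "\<exists>M. \<forall>m\<ge>M. \<forall>n\<ge>M. dist (y m) (y n) < e"
    proof (intro exI allI impI)
      fix m n assume mn: "N \<le> m" "N \<le> n"
      have h: "2/(Suc k) < e^2/2" if "N \<le> k" for k
      proof -
        have "real N \<le> real k" using that by simp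
        hence "4 / e^2 < Suc k" using N by simp
        then show ?thesis using e by (simp add: field_simps)
      qed
      have "(dist (y m) (y n))^2 < e^2"
        using cb[of m n] h[OF mn(1)] h[OF mn(2)] by (simp add: dist_norm)
      then show "dist (y m) (y n) < e" using e by (simp add: power_less_imp_less_base)
    qed
  qed
  then obtain p where py: "y \<longlonglongrightarrow> p"
    using Cauchy_convergent unfolding convergent_def by blast
  have pS: "p \<in> S" using closed_sequentially[OF assms(1)] yS py by blast
  have l1: "(\<lambda>n. (norm (x - y n))^2) \<longlonglongrightarrow> (norm (x - p))^2"
    by (intro tendsto_intros py)
  have l2: "(\<lambda>n. d^2 + 1/(Suc n)) \<longlonglongrightarrow> d^2 + 0"
    by (intro tendsto_intros LIMSEQ_inverse_real_of_nat[unfolded inverse_eq_divide] )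
  have l3: "\<forall>\<^sub>F n in sequentially. (norm (x - y n))^2 \<le> d^2 + 1/(Suc n)"
    using yd by (simp add: less_imp_le)
  have pd2: "(norm (x - p))^2 \<le> d^2 + 0"
    by (rule tendsto_le[OF sequentially_bot l2 l1 l3])
  have pd: "norm (x - p) \<le> d" using power2_le_imp_le[of "norm (x - p)" d] pd2 d0 by simp
  show ?thesis
  proof (intro bexI[of _ p] ballI)
    fix z assume "z \<in> S"
    show "norm (x - p) \<le> norm (x - z)" using pd dle[OF \<open>z \<in> S\<close>] by linarith
  qed (rule pS)
qed



lemma norm_diff_sq:
  fixes a b :: "'a::real_inner"
  shows "(norm (a - b))^2 = (norm a)^2 - 2 * inner a b + (norm b)^2"
  by (simp add: power2_norm_eq_inner inner_diff_left inner_diff_right inner_commute)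

lemma min_unique:
  fixes S :: "'a::real_inner set"
  assumes "convex S" "p \<in> S" "q \<in> S"
    and "\<forall>y\<in>S. norm (x - p) \<le> norm (x - y)" "\<forall>y\<in>S. norm (x - q) \<le> norm (x - y)"
  shows "p = q"
proof -
  have e: "norm (x - p) = norm (x - q)" using assms by (meson order_antisym)
  have mid: "(1/2) *\<^sub>R (p + q) \<in> S"
    using convexD[OF assms(1) assms(2) assms(3), of "1/2" "1/2"] by (simp add: scaleR_add_right)
  have "norm (x - p) \<le> norm (x - (1/2) *\<^sub>R (p + q))" using assms(4) mid by blast
  hence h: "(norm (x - p))^2 \<le> (norm (x - (1/2) *\<^sub>R (p + q)))^2" by (simp add: power_mono)
  have "x - (1/2) *\<^sub>R (p + q) = (1/2) *\<^sub>R ((x - p) + (x - q))"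
    by (simp add: algebra_simps flip: scaleR_add_left)
  moreover have "p - q = (x - q) - (x - p)" by simp
  ultimately have "(norm (p - q))^2 \<le> 0"
    using parallelogram[of "x - q" "x - p"] h e by (simp add: add.commute)
  thus ?thesis by simp
qed

lemma proj_min:
  fixes S :: "'a::{real_inner,complete_space} set"
  assumes "closed S" "convex S" "S \<noteq> {}"
  shows "proj S x \<in> S \<and> (\<forall>y\<in>S. norm (x - proj S x) \<le> norm (x - y))"
proof -
  obtain p where p: "p \<in> S" "\<forall>y\<in>S. norm (x - p) \<le> norm (x - y)"
    using proj_exists[OF assms] by blast
  have "\<exists>!p. p \<in> S \<and> (\<forall>y\<in>S. norm (x - p) \<le> norm (x - y))"
    using p min_unique[OF assms(2)] by blast
  thus ?thesis unfolding proj_def by (rule theI')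
qed

lemma small_t:
  fixes c a :: real
  assumes "\<And>t. 0 < t \<Longrightarrow> t \<le> 1 \<Longrightarrow> 2*c \<le> t * a" "a \<ge> 0"
  shows "c \<le> 0"
proof (rule ccontr)
  assume "\<not> c \<le> 0"
  hence c: "c > 0" by simp
  define t where "t = min 1 (c/(a+1))"
  have t: "0 < t" "t \<le> 1" using c assms(2) by (auto simp: t_def)
  have "t * a \<le> c/(a+1) * a" using assms(2) by (intro mult_right_mono) (auto simp: t_def)
  also have "\<dots> < c" using c assms(2) by (simp add: field_simps)
  finally show False using assms(1)[OF t] c by linarith
qed

lemma min_imp_var:
  fixes S :: "'a::real_inner set"
  assumes "convex S" "p \<in> S" "\<forall>y\<in>S. norm (x - p) \<le> norm (x - y)" "y \<in> S"
  shows "inner (x - p) (y - p) \<le> 0"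
proof (rule small_t)
  fix t :: real assume t: "0 < t" "t \<le> 1"
  have z: "(1 - t) *\<^sub>R p + t *\<^sub>R y \<in> S" using convexD[OF assms(1) assms(2) assms(4)] t by simp
  have eq: "x - ((1 - t) *\<^sub>R p + t *\<^sub>R y) = (x - p) - t *\<^sub>R (y - p)" by (simp add: algebra_simps)
  have "norm (x - p) \<le> norm (x - ((1 - t) *\<^sub>R p + t *\<^sub>R y))" using assms(3) z by blast
  hence "(norm (x - p))^2 \<le> (norm ((x - p) - t *\<^sub>R (y - p)))^2" unfolding eq by (simp add: power_mono)
  also have "\<dots> = (norm (x - p))^2 - 2 * t * inner (x - p) (y - p) + t^2 * (norm (y - p))^2"
    by (subst norm_diff_sq) (simp add: power_mult_distrib power2_abs)
  finally have "2 * t * inner (x - p) (y - p) \<le> t * (t * (norm (y - p))^2)" by (simp add: power2_eq_square algebra_simps)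
  thus "2 * inner (x - p) (y - p) \<le> t * (norm (y - p))^2" using t
    by (metis mult.assoc mult_le_cancel_left_pos mult.left_commute)
qed simp

lemma var_imp_min:
  fixes S :: "'a::real_inner set"
  assumes "\<forall>y\<in>S. inner (x - p) (y - p) \<le> 0" "y \<in> S"
  shows "norm (x - p) \<le> norm (x - y)"
proof -
  have "(norm (x - y))^2 = (norm ((x - p) - (y - p)))^2" by simp
  also have "\<dots> = (norm (x - p))^2 - 2 * inner (x - p) (y - p) + (norm (y - p))^2"
    by (rule norm_diff_sq)
  moreover have "inner (x - p) (y - p) \<le> 0" using assms by blast
  ultimately have "(norm (x - p))^2 \<le> (norm (x - y))^2" using zero_le_power2[of "norm (y - p)"] by linarith
  thus ?thesis using power2_le_imp_le[of "norm (x - p)" "norm (x - y)"] by simp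
qed

lemma proj_var:
  fixes S :: "'a::{real_inner,complete_space} set"
  assumes "closed S" "convex S" "S \<noteq> {}"
  shows "proj S x \<in> S \<and> (\<forall>y\<in>S. inner (x - proj S x) (y - proj S x) \<le> 0)"
  using proj_min[OF assms] min_imp_var[OF assms(2)] by blast

lemma proj_eqI:
  fixes S :: "'a::real_inner set"
  assumes "convex S" "p \<in> S" "\<forall>y\<in>S. inner (x - p) (y - p) \<le> 0"
  shows "proj S x = p"
proof -
  have m: "\<forall>y\<in>S. norm (x - p) \<le> norm (x - y)" using var_imp_min[OF assms(3)] by blast
  have "\<exists>!p. p \<in> S \<and> (\<forall>y\<in>S. norm (x - p) \<le> norm (x - y))"
    using m assms(2) min_unique[OF assms(1)] by blast
  thus ?thesis unfolding proj_def by (rule the1_equality) (use m assms(2) in blast)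
qed

lemma proj_subspace_perp:
  fixes M :: "'a::{real_inner,complete_space} set"
  assumes "subspace M" "closed M" "y \<in> M"
  shows "inner (x - proj M x) y = 0"
proof -
  have cv: "convex M" using assms(1) by (rule subspace_imp_convex)
  have ne: "M \<noteq> {}" using assms(3) by blast
  note pv = proj_var[OF assms(2) cv ne, of x]
  have "proj M x + y \<in> M" "proj M x - y \<in> M"
    using pv assms(1,3) by (auto intro: subspace_add subspace_diff)
  hence "inner (x - proj M x) (proj M x + y - proj M x) \<le> 0" "inner (x - proj M x) (proj M x - y - proj M x) \<le> 0"
    using pv by blast+
  thus ?thesis by (simp add: inner_diff_right)
qed

lemma halfsp_closed: "closed (halfsp x y)"
  unfolding halfsp_def by (intro closed_Collect_le continuous_intros) 

lemma halfsp_convex: "convex (halfsp x y)"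
proof (rule convexI)
  fix z1 z2 and u v :: real
  assume z: "z1 \<in> halfsp x y" "z2 \<in> halfsp x y" and uv: "0 \<le> u" "0 \<le> v" "u + v = 1"
  have "u *\<^sub>R z1 + v *\<^sub>R z2 - y = u *\<^sub>R (z1 - y) + v *\<^sub>R (z2 - y)"
    using uv by (simp add: algebra_simps flip: scaleR_add_left)
  hence "inner (u *\<^sub>R z1 + v *\<^sub>R z2 - y) (x - y) = u * inner (z1 - y) (x - y) + v * inner (z2 - y) (x - y)"
    by (simp add: inner_add_left)
  moreover have "u * inner (z1 - y) (x - y) \<le> 0" "v * inner (z2 - y) (x - y) \<le> 0"
    using z uv by (auto simp: halfsp_def intro: mult_nonneg_nonpos)
  ultimately show "u *\<^sub>R z1 + v *\<^sub>R z2 \<in> halfsp x y" by (simp add: halfsp_def)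
qed



lemma riesz:
  fixes L :: "'a::{real_inner,complete_space} \<Rightarrow> real"
  assumes bl: "bounded_linear L"
  shows "\<exists>p. \<forall>w. L w = inner p w"
proof (cases "\<forall>w. L w = 0")
  case True thus ?thesis by (intro exI[of _ 0]) simp
next
  case False
  then obtain w0 where w0: "L w0 \<noteq> 0" by blast
  interpret L: bounded_linear L by (rule bl)
  define N where "N = {w. L w = 0}"
  have subN: "subspace N" unfolding subspace_def N_def by (simp add: L.add L.scaleR)
  have clN: "closed N" unfolding N_def
    by (intro closed_Collect_eq continuous_on_const linear_continuous_on bl)
  have cvN: "convex N" using subN by (rule subspace_imp_convex)
  have neN: "N \<noteq> {}" using subN subspace_0 by blast
  define z where "z = w0 - proj N w0"
  have pN: "proj N w0 \<in> N" using proj_var[OF clN cvN neN] by blast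
  have Lz: "L z = L w0" using pN by (simp add: z_def L.diff N_def)
  have perp: "inner z y = 0" if "y \<in> N" for y
    using proj_subspace_perp[OF subN clN that] by (simp add: z_def)
  have zz: "inner z z \<noteq> 0" using Lz w0 L.zero by auto
  define p where "p = (L z / inner z z) *\<^sub>R z"
  show ?thesis
  proof (intro exI allI)
    fix w
    define c where "c = L w / L z"
    have "w - c *\<^sub>R z \<in> N" using Lz w0 by (simp add: N_def L.diff L.scaleR c_def)
    hence "inner z (w - c *\<^sub>R z) = 0" by (rule perp)
    hence "inner z w = c * inner z z" by (simp add: inner_diff_right)
    thus "L w = inner p w" using zz Lz w0 by (simp add: p_def c_def)
  qed
qed

lemma subseq_frequently:
  assumes "frequently P sequentially"
  shows "\<exists>r::nat\<Rightarrow>nat. strict_mono r \<and> (\<forall>n. P (r n))"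
proof -
  have inf: "infinite {n. P n}" using assms
    by (simp add: frequently_sequentially infinite_nat_iff_unbounded_le)
  show ?thesis
  proof -
    have "strict_mono (enumerate {n. P n}) \<and> (\<forall>n. P (enumerate {n. P n} n))"
      using strict_mono_enumerate[OF inf] enumerate_in_set[OF inf] by auto
    thus ?thesis by blast
  qed
qed

lemma weak_conv_subseq: "weak_conv u p \<Longrightarrow> strict_mono r \<Longrightarrow> weak_conv (u \<circ> r) p"
  unfolding weak_conv_def using LIMSEQ_subseq_LIMSEQ by (fastforce simp: o_def)

lemma weak_compact:
  fixes u :: "nat \<Rightarrow> 'a::{real_inner,complete_space}"
  assumes "bounded (range u)"
  shows "\<exists>r p. strict_mono r \<and> weak_conv (u \<circ> r) p"
proof -
  obtain B where B: "B > 0" "\<And>n. norm (u n) \<le> B" using assms unfolding bounded_pos by blast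
  have stable: "convergent (\<lambda>n. f ((s \<circ> r) n))" if "strict_mono r" "convergent (\<lambda>n. f (s n))"
    for f :: "nat \<Rightarrow> real" and s r
    using that LIMSEQ_subseq_LIMSEQ[of "\<lambda>n. f (s n)" _ r] unfolding convergent_def by (auto simp: o_def)
  have "\<exists>r. strict_mono r \<and> (\<forall>k. convergent (\<lambda>n. inner (u (r n)) (u k)))"
  proof -
    interpret subseqs "\<lambda>k s. convergent (\<lambda>n. inner (u (s n)) (u k))"
    proof
      fix k and s :: "nat \<Rightarrow> nat" assume "strict_mono s"
      have "\<forall>n. norm (inner (u (s n)) (u k)) \<le> B * norm (u k)"
      proof
        fix n
        show "norm (inner (u (s n)) (u k)) \<le> B * norm (u k)"
          using Cauchy_Schwarz_ineq2[of "u (s n)" "u k"] mult_right_mono[OF B(2)[of "s n"] norm_ge_zero[of "u k"]]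
          by simp
      qed
      hence "bounded (range (\<lambda>n. inner (u (s n)) (u k)))" unfolding bounded_iff by blast
      then obtain l r' where "strict_mono r'" "((\<lambda>n. inner (u (s n)) (u k)) \<circ> r') \<longlonglongrightarrow> l"
        using bounded_imp_convergent_subsequence by blast
      thus "\<exists>r'. strict_mono r' \<and> convergent (\<lambda>n. inner (u ((s \<circ> r') n)) (u k))"
        by (auto simp: convergent_def o_def)
    qed
    have "convergent (\<lambda>n. inner (u (diagseq n)) (u k))" for k
    proof -
      have "convergent (\<lambda>n. inner (u ((diagseq \<circ> (+) (Suc k)) n)) (u k))"
        by (rule diagseq_holds) (rule stable)
      then obtain l where "(\<lambda>n. inner (u (diagseq (n + Suc k))) (u k)) \<longlonglongrightarrow> l"
        unfolding convergent_def by (auto simp: o_def add.commute)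
      hence "(\<lambda>n. inner (u (diagseq n)) (u k)) \<longlonglongrightarrow> l" by (rule LIMSEQ_offset)
      thus ?thesis by (auto simp: convergent_def)
    qed
    thus ?thesis using subseq_diagseq by blast
  qed
  then obtain r where r: "strict_mono r" "\<And>k. convergent (\<lambda>n. inner (u (r n)) (u k))" by blast
  define v where "v = u \<circ> r"
  have vB: "norm (v n) \<le> B" for n using B(2) by (simp add: v_def)
  define Cv where "Cv = {w. convergent (\<lambda>n. inner (v n) w)}"
  have subC: "subspace Cv" unfolding subspace_def Cv_def
  proof (intro conjI ballI allI; clarsimp simp: convergent_def)
    fix a b la lb assume "(\<lambda>n. inner (v n) a) \<longlonglongrightarrow> la" "(\<lambda>n. inner (v n) b) \<longlonglongrightarrow> lb"
    hence "(\<lambda>n. inner (v n) a + inner (v n) b) \<longlonglongrightarrow> la + lb" by (rule tendsto_add)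
    thus "\<exists>L. (\<lambda>n. inner (v n) (a + b)) \<longlonglongrightarrow> L" by (auto simp: inner_add_right)
  next
    fix c a la assume "(\<lambda>n. inner (v n) a) \<longlonglongrightarrow> la"
    hence "(\<lambda>n. c * inner (v n) a) \<longlonglongrightarrow> c * la" by (rule tendsto_mult_left)
    thus "\<exists>L. (\<lambda>n. c * inner (v n) a) \<longlonglongrightarrow> L" by blast
  qed (rule exI, rule tendsto_const)
  have ranC: "u k \<in> Cv" for k using r(2)[of k] by (simp add: Cv_def v_def)
  have clC: "closed Cv" unfolding closed_sequential_limits
  proof (intro allI impI)
    fix w l assume wl: "(\<forall>n. w n \<in> Cv) \<and> w \<longlonglongrightarrow> l"
    have "Cauchy (\<lambda>n. inner (v n) l)"
    proof (rule metric_CauchyI)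
      fix e :: real assume e: "e > 0"
      obtain j where j: "norm (w j - l) < e / (3 * B)"
        using wl e B(1) unfolding LIMSEQ_iff by (metis divide_pos_pos zero_less_mult_iff
            zero_less_numeral order_refl norm_minus_commute)
      have "Cauchy (\<lambda>n. inner (v n) (w j))" using wl by (intro convergent_Cauchy) (simp add: Cv_def)
      then obtain M where M: "\<And>m n. m \<ge> M \<Longrightarrow> n \<ge> M \<Longrightarrow> dist (inner (v m) (w j)) (inner (v n) (w j)) < e/3"
        using e unfolding Cauchy_def by (meson zero_less_divide_iff zero_less_numeral)
      have bnd: "\<bar>inner (v m) l - inner (v m) (w j)\<bar> < e/3" for m
      proof -
        have "\<bar>inner (v m) l - inner (v m) (w j)\<bar> = \<bar>inner (v m) (l - w j)\<bar>" by (simp add: inner_diff_right)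
        also have "\<dots> \<le> norm (v m) * norm (l - w j)" by (rule Cauchy_Schwarz_ineq2)
        also have "\<dots> \<le> B * norm (w j - l)" using vB[of m] by (simp add: mult_right_mono norm_minus_commute)
        also have "\<dots> < B * (e / (3 * B))" by (rule mult_strict_left_mono[OF j B(1)])
        also have "\<dots> = e/3" using B(1) by simp
        finally show ?thesis .
      qed
      show "\<exists>M. \<forall>m\<ge>M. \<forall>n\<ge>M. dist (inner (v m) l) (inner (v n) l) < e"
      proof (intro exI allI impI)
        fix m n assume "M \<le> m" "M \<le> n"
        from M[OF this] bnd[of m] bnd[of n]
        show "dist (inner (v m) l) (inner (v n) l) < e" unfolding dist_real_def by arith
      qed
    qed
    thus "l \<in> Cv" by (simp add: Cv_def Cauchy_convergent_iff)
  qed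
  have cvC: "convex Cv" using subC by (rule subspace_imp_convex)
  have neC: "Cv \<noteq> {}" using ranC by blast
  have allC: "w \<in> Cv" for w
  proof -
    have pC: "proj Cv w \<in> Cv" using proj_var[OF clC cvC neC] by blast
    have "inner (v n) (w - proj Cv w) = 0" for n
      using proj_subspace_perp[OF subC clC ranC[of "r n"], of w] by (simp add: v_def inner_commute)
    hence "w - proj Cv w \<in> Cv" by (simp add: Cv_def convergent_const)
    hence "proj Cv w + (w - proj Cv w) \<in> Cv" using pC subC by (intro subspace_add) auto
    thus ?thesis by simp
  qed
  define L where "L w = lim (\<lambda>n. inner (v n) w)" for w
  have hL: "(\<lambda>n. inner (v n) w) \<longlonglongrightarrow> L w" for w
    using allC[of w] by (simp add: Cv_def L_def convergent_LIMSEQ_iff)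
  have "bounded_linear L"
  proof (rule bounded_linear_intro)
    fix a b
    have "(\<lambda>n. inner (v n) (a + b)) \<longlonglongrightarrow> L a + L b"
      using tendsto_add[OF hL[of a] hL[of b]] by (simp add: inner_add_right)
    thus "L (a + b) = L a + L b" using hL[of "a + b"] by (rule LIMSEQ_unique[rotated])
  next
    fix c a
    have "(\<lambda>n. inner (v n) (c *\<^sub>R a)) \<longlonglongrightarrow> c *\<^sub>R L a"
      using tendsto_mult_left[OF hL[of a], of c] by simp
    thus "L (c *\<^sub>R a) = c *\<^sub>R L a" using hL[of "c *\<^sub>R a"] by (rule LIMSEQ_unique[rotated])
  next
    fix a
    have "(\<lambda>n. \<bar>inner (v n) a\<bar>) \<longlonglongrightarrow> \<bar>L a\<bar>" by (rule tendsto_rabs[OF hL])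
    moreover have "\<forall>\<^sub>F n in sequentially. \<bar>inner (v n) a\<bar> \<le> B * norm a"
    proof (rule always_eventually, rule allI)
      fix n
      show "\<bar>inner (v n) a\<bar> \<le> B * norm a"
        using Cauchy_Schwarz_ineq2[of "v n" a] mult_right_mono[OF vB[of n] norm_ge_zero[of a]] by simp
    qed
    ultimately have "\<bar>L a\<bar> \<le> B * norm a"
      by (rule tendsto_le[OF sequentially_bot tendsto_const])
    thus "norm (L a) \<le> norm a * B" by (simp add: mult.commute)
  qed
  then obtain p where p: "\<And>w. L w = inner p w" using riesz by blast
  have "weak_conv v p" unfolding weak_conv_def using hL p by simp
  thus ?thesis using r(1) v_def by blast
qed



lemma tele_summable:
  fixes a b :: "nat \<Rightarrow> real"
  assumes b0: "\<And>n. 0 \<le> b n" and bl: "\<And>n. b n \<le> a (Suc n) - a n" and aK: "\<And>n. a n \<le> K"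
  shows "summable b"
proof (rule bounded_imp_summable[where B = "K - a 0"])
  fix n
  have "(\<Sum>k\<le>n. b k) \<le> (\<Sum>k\<le>n. a (Suc k) - a k)" by (rule sum_mono) (rule bl)
  also have "\<dots> = a (Suc n) - a 0" using sum_lessThan_telescope[of a "Suc n"] by (simp add: lessThan_Suc_atMost)
  finally show "(\<Sum>k\<le>n. b k) \<le> K - a 0" using aK[of "Suc n"] by linarith
qed (rule b0)

lemma coh_cluster:
  assumes "coherent F T" "bounded (range z)" "summable (\<lambda>n. (norm (z (Suc n) - z n))\<^sup>2)"
    "summable (\<lambda>n. (norm (z n - T n (z n)))\<^sup>2)" "strict_mono r" "weak_conv (z \<circ> r) p"
  shows "p \<in> F"
  using assms unfolding coherent_def weak_cluster_point_def by blast

lemma halfsp_ineq: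
  fixes a b c :: "'a::real_inner"
  assumes "c \<in> halfsp a b"
  shows "(norm (a - b))^2 + (norm (c - b))^2 \<le> (norm (c - a))^2"
proof -
  have "c - a = (c - b) - (a - b)" by simp
  hence "(norm (c - a))^2 = (norm (c - b))^2 - 2 * inner (c - b) (a - b) + (norm (a - b))^2"
    using norm_diff_sq by metis
  moreover have "inner (c - b) (a - b) \<le> 0" using assms by (simp add: halfsp_def)
  ultimately show ?thesis by linarith
qed

lemma halfsp_self: "halfsp a a = UNIV" by (simp add: halfsp_def)

lemma bounded_from_sq:
  fixes x :: "nat \<Rightarrow> 'a::real_normed_vector"
  assumes "\<And>n. (norm (x n - x0))^2 \<le> K"
  shows "bounded (range x)"
proof -
  have "range x \<subseteq> cball x0 (sqrt K)"
    using assms real_le_rsqrt by (auto simp: dist_norm norm_minus_commute)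
  thus ?thesis using bounded_cball bounded_subset by blast
qed

lemma haug:
  fixes F :: "'a::{real_inner,complete_space} set" and T :: "nat \<Rightarrow> 'a \<Rightarrow> 'a"
    and x :: "nat \<Rightarrow> 'a"
  assumes UF: "\<forall>n. T n \<in> UF F" and coh: "coherent F T" and clF: "closed F" and cvF: "convex F"
    and x00: "x 0 = x0"
    and it: "\<forall>n. halfsp x0 (x n) \<inter> halfsp (x n) (T n (x n)) \<noteq> {} \<longrightarrow> x (Suc n) = Qmap x0 (x n) (T n (x n))"
  defines "C \<equiv> \<lambda>n. halfsp x0 (x n) \<inter> halfsp (x n) (T n (x n))"
  shows "((\<exists>n. C n = {}) \<longrightarrow> F = {})
       \<and> ((\<not>(\<exists>n. C n = {}) \<and> F \<noteq> {}) \<longrightarrow> x \<longlonglongrightarrow> proj F x0)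
       \<and> ((\<not>(\<exists>n. C n = {}) \<and> F = {}) \<longrightarrow> filterlim (\<lambda>n. norm (x n)) at_top sequentially)"
proof -
  have FT: "F \<subseteq> halfsp y (T n y)" for n y using UF by (simp add: UF_def)
  have clC: "closed (C n)" for n unfolding C_def by (intro closed_Int halfsp_closed)
  have cvC: "convex (C n)" for n unfolding C_def by (intro convex_Int halfsp_convex)
  have step: "x (Suc n) \<in> C n \<and> C n \<subseteq> halfsp x0 (x (Suc n))" if ne: "C n \<noteq> {}" for n
  proof -
    have xs: "x (Suc n) = proj (C n) x0" using it ne by (simp add: C_def Qmap_def)
    note pv = proj_var[OF clC cvC ne, of x0]
    have "C n \<subseteq> halfsp x0 (x (Suc n))"
    proof
      fix y assume "y \<in> C n"
      hence "inner (x0 - x (Suc n)) (y - x (Suc n)) \<le> 0" using pv xs by simp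
      thus "y \<in> halfsp x0 (x (Suc n))" by (simp add: halfsp_def inner_commute)
    qed
    thus ?thesis using pv xs by simp
  qed
  have inv: "(\<forall>m<n. C m \<noteq> {}) \<longrightarrow> F \<subseteq> halfsp x0 (x n)" for n
  proof (induction n)
    case 0 show ?case by (simp add: x00 halfsp_self)
  next
    case (Suc n)
    show ?case
    proof
      assume a: "\<forall>m<Suc n. C m \<noteq> {}"
      hence "F \<subseteq> halfsp x0 (x n)" using Suc by simp
      hence "F \<subseteq> C n" using FT unfolding C_def by blast
      thus "F \<subseteq> halfsp x0 (x (Suc n))" using step[of n] a by blast
    qed
  qed
  have part1: "F = {}" if ex: "\<exists>n. C n = {}"
  proof -
    obtain n where n: "C n = {}" "\<forall>m<n. C m \<noteq> {}"
      using ex exists_least_iff[of "\<lambda>n. C n = {}"] by blast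
    have "F \<subseteq> C n" using inv[of n] n(2) FT unfolding C_def by blast
    thus ?thesis using n(1) by blast
  qed
  have main: "(F \<noteq> {} \<longrightarrow> x \<longlonglongrightarrow> proj F x0) \<and> (F = {} \<longrightarrow> filterlim (\<lambda>n. norm (x n)) at_top sequentially)"
    if nt: "\<not>(\<exists>n. C n = {})"
  proof -
    have ne: "C n \<noteq> {}" for n using nt by blast
    define a where "a n = (norm (x n - x0))^2" for n
    have Fh: "F \<subseteq> halfsp x0 (x n)" for n using inv[of n] ne by blast
    have inc: "a n + (norm (x (Suc n) - x n))^2 \<le> a (Suc n)" for n
    proof -
      have "x (Suc n) \<in> halfsp x0 (x n)" using step[OF ne[of n]] by (simp add: C_def)
      from halfsp_ineq[OF this] show ?thesis by (simp add: a_def norm_minus_commute)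
    qed
    have Tn: "(norm (x n - T n (x n)))^2 \<le> (norm (x (Suc n) - x n))^2" for n
    proof -
      have "x (Suc n) \<in> halfsp (x n) (T n (x n))" using step[OF ne[of n]] by (simp add: C_def)
      from halfsp_ineq[OF this] have "(norm (x n - T n (x n)))^2 + (norm (x (Suc n) - T n (x n)))^2 \<le> (norm (x (Suc n) - x n))^2"
        by (simp add: norm_minus_commute)
      thus ?thesis using zero_le_power2[of "norm (x (Suc n) - T n (x n))"] by linarith
    qed
    have incseq: "incseq a" using inc by (intro incseq_SucI) (smt (verit) zero_le_power2)
    have cluster: "\<exists>q r. q \<in> F \<and> strict_mono r \<and> weak_conv (x \<circ> r) q" if K: "\<And>n. a n \<le> K" for K
    proof -
      have bd: "bounded (range x)" using K by (intro bounded_from_sq) (simp add: a_def)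
      have s1: "summable (\<lambda>n. (norm (x (Suc n) - x n))\<^sup>2)"
        by (rule tele_summable[of _ a K]) (use inc K in \<open>auto simp: algebra_simps\<close>)
      have s2: "summable (\<lambda>n. (norm (x n - T n (x n)))\<^sup>2)"
        by (rule summable_comparison_test[OF _ s1]) (use Tn in auto)
      obtain r q where r: "strict_mono r" "weak_conv (x \<circ> r) q" using weak_compact[OF bd] by blast
      have "q \<in> F" by (rule coh_cluster[OF coh bd s1 s2 r])
      thus ?thesis using r by blast
    qed
    show ?thesis
    proof (intro conjI impI)
      assume Fne: "F \<noteq> {}"
      define p where "p = proj F x0"
      note pm = proj_min[OF clF cvF Fne, of x0]
      have pF: "p \<in> F" using pm by (simp add: p_def)
      define \<delta> where "\<delta> = (norm (p - x0))^2"
      have gap: "a n + (norm (p - x n))^2 \<le> \<delta>" for n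
        using halfsp_ineq[of p x0 "x n"] Fh[of n] pF by (auto simp: a_def \<delta>_def norm_minus_commute)
      have aK: "a n \<le> \<delta>" for n using gap[of n] by (smt (verit) zero_le_power2)
      obtain q r where qr: "q \<in> F" "strict_mono r" "weak_conv (x \<circ> r) q" using cluster[OF aK] by blast
      define A where "A = (SUP n. a n)"
      have bdd: "bdd_above (range a)" using aK by (intro bdd_aboveI[of _ \<delta>]) auto
      have aA: "a \<longlonglongrightarrow> A" unfolding A_def by (rule LIMSEQ_incseq_SUP[OF bdd incseq])
      have anA: "a n \<le> A" for n unfolding A_def using cSUP_upper[OF _ bdd, of n] by simp
      have Ad: "A \<le> \<delta>" unfolding A_def using aK by (intro cSUP_least) auto
      have dq: "\<delta> \<le> (norm (q - x0))^2"
        using pm qr(1) unfolding \<delta>_def p_def by (simp add: norm_minus_commute power_mono)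
      have lim1: "(\<lambda>n. 2 * inner (x (r n) - x0) (q - x0)) \<longlonglongrightarrow> 2 * inner (q - x0) (q - x0)"
      proof -
        have "(\<lambda>n. inner (x (r n)) (q - x0)) \<longlonglongrightarrow> inner q (q - x0)"
          using qr(3) by (simp add: weak_conv_def o_def)
        hence "(\<lambda>n. 2 * (inner (x (r n)) (q - x0) - inner x0 (q - x0))) \<longlonglongrightarrow> 2 * (inner q (q - x0) - inner x0 (q - x0))"
          by (rule tendsto_mult_left[OF tendsto_diff[OF _ tendsto_const]])
        thus ?thesis by (simp add: inner_diff_left)
      qed
      have le1: "2 * inner (x (r n) - x0) (q - x0) \<le> A + (norm (q - x0))^2" for n
      proof -
        have "0 \<le> (norm ((x (r n) - x0) - (q - x0)))^2" by simp
        hence "2 * inner (x (r n) - x0) (q - x0) \<le> a (r n) + (norm (q - x0))^2"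
          unfolding norm_diff_sq a_def by linarith
        thus ?thesis using anA[of "r n"] by linarith
      qed
      have "2 * inner (q - x0) (q - x0) \<le> A + (norm (q - x0))^2"
        by (rule tendsto_le[OF sequentially_bot tendsto_const lim1]) (use le1 in auto)
      hence "(norm (q - x0))^2 \<le> A" by (simp add: power2_norm_eq_inner)
      hence Aeq: "A = \<delta>" using Ad dq by linarith
      have g: "(\<lambda>n. \<delta> - a n) \<longlonglongrightarrow> \<delta> - A" by (intro tendsto_intros aA)
      have "(\<lambda>n. (norm (x n - p))^2) \<longlonglongrightarrow> 0"
      proof (rule tendsto_sandwich[OF _ _ tendsto_const g[unfolded Aeq, simplified]])
        show "\<forall>\<^sub>F n in sequentially. 0 \<le> (norm (x n - p))^2" by simp
        show "\<forall>\<^sub>F n in sequentially. (norm (x n - p))^2 \<le> \<delta> - a n"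
          using gap by (simp add: norm_minus_commute algebra_simps)
      qed
      hence "(\<lambda>n. sqrt ((norm (x n - p))^2)) \<longlonglongrightarrow> sqrt 0" by (rule tendsto_real_sqrt)
      hence "(\<lambda>n. norm (x n - p)) \<longlonglongrightarrow> 0" by simp
      hence "(\<lambda>n. x n - p) \<longlonglongrightarrow> 0" by (simp add: tendsto_norm_zero_iff)
      thus "x \<longlonglongrightarrow> proj F x0" unfolding p_def[symmetric] by (rule LIM_zero_cancel)
    next
      assume Fe: "F = {}"
      have unb: "\<not> (\<exists>K. \<forall>n. a n \<le> K)" using cluster Fe by blast
      show "filterlim (\<lambda>n. norm (x n)) at_top sequentially"
        unfolding filterlim_at_top
      proof
        fix Z :: real
        obtain N where N: "a N > (max 0 (Z + norm x0))^2" using unb by (meson not_le)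
        have "eventually (\<lambda>n. n \<ge> N) sequentially" by (rule eventually_ge_at_top)
        thus "eventually (\<lambda>n. Z \<le> norm (x n)) sequentially"
        proof (rule eventually_mono)
          fix n assume "N \<le> n"
          hence "a N \<le> a n" using incseq by (simp add: incseq_def)
          hence "(max 0 (Z + norm x0))^2 < (norm (x n - x0))^2" using N unfolding a_def by linarith
          hence "max 0 (Z + norm x0) < norm (x n - x0)" by (rule power_less_imp_less_base) simp
          moreover have "norm (x n - x0) \<le> norm (x n) + norm x0" by (rule norm_triangle_ineq4)
          ultimately show "Z \<le> norm (x n)" by linarith
        qed
      qed
    qed
  qed
  show ?thesis using part1 main by blast
qed



lemma norm_add_sq:
  fixes a b :: "'a::real_inner"
  shows "(norm (a + b))^2 = (norm a)^2 + 2 * inner a b + (norm b)^2"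
  by (simp add: power2_norm_eq_inner inner_add_left inner_add_right inner_commute)

lemma weak_unique:
  fixes x :: "nat \<Rightarrow> 'a::real_inner"
  assumes cp: "convergent (\<lambda>n. (norm (x n - p))^2)" and cq: "convergent (\<lambda>n. (norm (x n - q))^2)"
    and r: "strict_mono r" "weak_conv (x \<circ> r) p" and s: "strict_mono s" "weak_conv (x \<circ> s) q"
  shows "p = q"
proof -
  have id0: "2 * inner (x n) (q - p) = (norm (x n - p))^2 - (norm (x n - q))^2 + (norm q)^2 - (norm p)^2" for n
    by (simp add: power2_norm_eq_inner inner_diff_left inner_diff_right inner_commute)
  obtain lp lq where lp: "(\<lambda>n. (norm (x n - p))^2) \<longlonglongrightarrow> lp" and lq: "(\<lambda>n. (norm (x n - q))^2) \<longlonglongrightarrow> lq"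
    using cp cq unfolding convergent_def by blast
  define c where "c = lp - lq + (norm q)^2 - (norm p)^2"
  have g: "(\<lambda>n. 2 * inner (x n) (q - p)) \<longlonglongrightarrow> c"
    unfolding id0 c_def by (intro tendsto_diff tendsto_add lp lq tendsto_const)
  have "(\<lambda>n. 2 * inner (x (r n)) (q - p)) \<longlonglongrightarrow> c" using LIMSEQ_subseq_LIMSEQ[OF g r(1)] by (simp add: o_def)
  moreover have "(\<lambda>n. 2 * inner (x (r n)) (q - p)) \<longlonglongrightarrow> 2 * inner p (q - p)"
    using r(2) by (intro tendsto_mult_left) (simp add: weak_conv_def o_def)
  ultimately have c1: "2 * inner p (q - p) = c" using LIMSEQ_unique by blast
  have "(\<lambda>n. 2 * inner (x (s n)) (q - p)) \<longlonglongrightarrow> c" using LIMSEQ_subseq_LIMSEQ[OF g s(1)] by (simp add: o_def)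
  moreover have "(\<lambda>n. 2 * inner (x (s n)) (q - p)) \<longlonglongrightarrow> 2 * inner q (q - p)"
    using s(2) by (intro tendsto_mult_left) (simp add: weak_conv_def o_def)
  ultimately have c2: "2 * inner q (q - p) = c" using LIMSEQ_unique by blast
  have "inner (q - p) (q - p) = 0" using c1 c2 by (simp add: inner_diff_left)
  thus ?thesis by simp
qed

lemma fejer_weak:
  fixes x :: "nat \<Rightarrow> 'a::{real_inner,complete_space}" and F :: "'a set"
  assumes bd: "\<And>r::nat\<Rightarrow>nat. strict_mono r \<Longrightarrow> bounded (range (x \<circ> r))"
    and clus: "\<And>(r::nat\<Rightarrow>nat) q. strict_mono r \<Longrightarrow> weak_conv (x \<circ> r) q \<Longrightarrow> q \<in> F"
    and conv: "\<And>q. q \<in> F \<Longrightarrow> convergent (\<lambda>n. (norm (x n - q))^2)"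
  shows "\<exists>p\<in>F. weak_conv x p"
proof -
  obtain r p where r: "strict_mono r" "weak_conv (x \<circ> r) p"
    using weak_compact[OF bd[of id]] by (auto simp: strict_mono_def)
  have pF: "p \<in> F" by (rule clus[OF r])
  have "weak_conv x p" unfolding weak_conv_def
  proof (rule allI, rule ccontr)
    fix y assume nc: "\<not> (\<lambda>n. inner (x n) y) \<longlonglongrightarrow> inner p y"
    then obtain e where e: "e > 0" "\<not> eventually (\<lambda>n. dist (inner (x n) y) (inner p y) < e) sequentially"
      unfolding tendsto_iff by blast
    obtain s :: "nat \<Rightarrow> nat" where s: "strict_mono s" "\<And>n. \<not> dist (inner (x (s n)) y) (inner p y) < e"
      using not_eventually_sequentiallyD[OF e(2)] by blast
    obtain r' q where r': "strict_mono r'" "weak_conv (x \<circ> s \<circ> r') q"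
      using weak_compact[OF bd[OF s(1)]] by blast
    have sr: "strict_mono (s \<circ> r')" using s(1) r'(1) by (rule strict_mono_o)
    have wq: "weak_conv (x \<circ> (s \<circ> r')) q" using r'(2) by (simp add: o_assoc)
    have qF: "q \<in> F" by (rule clus[OF sr wq])
    have "p = q" by (rule weak_unique[OF conv[OF pF] conv[OF qF] r sr wq])
    have "(\<lambda>n. inner (x (s (r' n))) y) \<longlonglongrightarrow> inner q y" using wq by (simp add: weak_conv_def o_def)
    hence "(\<lambda>n. dist (inner (x (s (r' n))) y) (inner p y)) \<longlonglongrightarrow> dist (inner q y) (inner p y)"
      by (rule tendsto_dist[OF _ tendsto_const])
    moreover have "\<forall>\<^sub>F n in sequentially. e \<le> dist (inner (x (s (r' n))) y) (inner p y)"
      using s(2) by (simp add: not_less)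
    ultimately have "e \<le> dist (inner q y) (inner p y)"
      by (rule tendsto_le[OF sequentially_bot _ tendsto_const])
    thus False using \<open>p = q\<close> e(1) by simp
  qed
  thus ?thesis using pF by blast
qed

lemma fejer_step:
  fixes F :: "'a::real_inner set"
  assumes UF: "\<forall>n. T n \<in> UF F" and q: "q \<in> F" and eps: "0 < \<epsilon>" "\<epsilon> \<le> 1"
    and it: "x (Suc n) = x n + (2 - \<epsilon>) *\<^sub>R (T n (x n) - x n)"
  shows "(norm (x (Suc n) - q))^2 + (2 - \<epsilon>) * \<epsilon> * (norm (T n (x n) - x n))^2 \<le> (norm (x n - q))^2"
proof -
  define d where "d = T n (x n) - x n"
  define l where "l = 2 - \<epsilon>"
  have qh: "q \<in> halfsp (x n) (T n (x n))" using UF q by (auto simp: UF_def)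
  have eq: "x (Suc n) - q = (x n - q) + l *\<^sub>R d" using it by (simp add: d_def l_def algebra_simps)
  have e2: "(norm (x (Suc n) - q))^2 = (norm (x n - q))^2 + 2 * l * inner (x n - q) d + l^2 * (norm d)^2"
    unfolding eq norm_add_sq by (simp add: power_mult_distrib power2_abs)
  have "inner (x n - q) d = -((norm d)^2) + inner (q - T n (x n)) (x n - T n (x n))"
    by (simp add: d_def power2_norm_eq_inner inner_diff_left inner_diff_right inner_commute algebra_simps)
  moreover have "inner (q - T n (x n)) (x n - T n (x n)) \<le> 0" using qh by (simp add: halfsp_def)
  ultimately have f1: "inner (x n - q) d \<le> -((norm d)^2)" by linarith
  have "l > 0" using eps by (simp add: l_def)
  hence "2 * l * inner (x n - q) d \<le> 2 * l * (-((norm d)^2))" using mult_left_mono[OF f1, of "2 * l"] by simp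
  hence "(norm (x (Suc n) - q))^2 \<le> (norm (x n - q))^2 - l * (2 - l) * (norm d)^2"
    using e2 by (simp add: algebra_simps power2_eq_square)
  thus ?thesis by (simp add: l_def d_def algebra_simps)
qed

lemma fejer:
  fixes F :: "'a::{real_inner,complete_space} set" and T :: "nat \<Rightarrow> 'a \<Rightarrow> 'a"
  assumes UF: "\<forall>n. T n \<in> UF F" and coh: "coherent F T" and Fne: "F \<noteq> {}"
    and eps: "0 < \<epsilon>" "\<epsilon> \<le> 1"
    and it: "\<forall>n. x (Suc n) = x n + (2 - \<epsilon>) *\<^sub>R (T n (x n) - x n)"
  shows "\<exists>p\<in>F. weak_conv x p"
proof -
  define c where "c = (2 - \<epsilon>) * \<epsilon>"
  have c0: "c > 0" using eps by (simp add: c_def)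
  have st: "(norm (x (Suc n) - q))^2 + c * (norm (T n (x n) - x n))^2 \<le> (norm (x n - q))^2" if "q \<in> F" for q n
    using fejer_step[OF UF that eps it[rule_format]] by (simp add: c_def)
  have dec: "decseq (\<lambda>n. (norm (x n - q))^2)" if "q \<in> F" for q
    using st[OF that] c0 by (intro decseq_SucI) (smt (verit) mult_nonneg_nonneg zero_le_power2)
  have conv: "convergent (\<lambda>n. (norm (x n - q))^2)" if "q \<in> F" for q
  proof -
    have "bdd_below (range (\<lambda>n. (norm (x n - q))^2))" by (intro bdd_belowI[of _ 0]) auto
    thus ?thesis using LIMSEQ_decseq_INF dec[OF that] unfolding convergent_def by blast
  qed
  obtain q0 where q0: "q0 \<in> F" using Fne by blast
  have le0: "(norm (x n - q0))^2 \<le> (norm (x 0 - q0))^2" for n using dec[OF q0] by (simp add: decseq_def)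
  have bdx: "bounded (range x)" by (rule bounded_from_sq[of x q0]) (rule le0)
  have bd: "bounded (range (x \<circ> r))" if "strict_mono r" for r
    using bdx by (rule bounded_subset) auto
  have sd: "summable (\<lambda>n. (norm (T n (x n) - x n))^2)"
  proof (rule tele_summable[where a = "\<lambda>n. -((norm (x n - q0))^2) / c" and K = 0])
    fix n
    show "(norm (T n (x n) - x n))^2 \<le> -((norm (x (Suc n) - q0))^2) / c - (-((norm (x n - q0))^2) / c)"
      using st[OF q0, of n] c0 by (simp add: field_simps)
  qed (use c0 in auto)
  have s1: "summable (\<lambda>n. (norm (x (Suc n) - x n))^2)"
  proof -
    have "summable (\<lambda>n. (2 - \<epsilon>)^2 * (norm (T n (x n) - x n))^2)" by (rule summable_mult[OF sd])
    moreover have "(norm (x (Suc n) - x n))^2 = (2 - \<epsilon>)^2 * (norm (T n (x n) - x n))^2" for n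
      using it eps by (simp add: power_mult_distrib power2_abs)
    ultimately show ?thesis by simp
  qed
  have s2: "summable (\<lambda>n. (norm (x n - T n (x n)))^2)" using sd by (simp add: norm_minus_commute)
  show ?thesis
  proof (rule fejer_weak[OF bd _ conv])
    fix r q assume "strict_mono r" "weak_conv (x \<circ> r) q"
    thus "q \<in> F" by (rule coh_cluster[OF coh bdx s1 s2])
  qed
qed

theorem theorem10:
  fixes F :: "'a::{real_inner,complete_space} set"
    and T :: "nat \<Rightarrow> 'a \<Rightarrow> 'a"
  assumes "closed F" and "convex F"
    and "\<forall>n. T n \<in> UF F"
    and "coherent F T"
  shows "(F \<noteq> {} \<longrightarrow>
           (\<forall>\<epsilon>::real. \<forall>x0 x. 0 < \<epsilon> \<and> \<epsilon> \<le> 1 \<and> x 0 = x0 \<and>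
              (\<forall>n. x (Suc n) = x n + (2 - \<epsilon>) *\<^sub>R (T n (x n) - x n))
              \<longrightarrow> (\<exists>p\<in>F. weak_conv x p)))
       \<and> (\<forall>x0 x. x 0 = x0 \<and>
            (\<forall>n. halfsp x0 (x n) \<inter> halfsp (x n) (T n (x n)) \<noteq> {}
                  \<longrightarrow> x (Suc n) = Qmap x0 (x n) (T n (x n)))
          \<longrightarrow> (let term = (\<exists>n. halfsp x0 (x n) \<inter> halfsp (x n) (T n (x n)) = {});
                   a = (F \<noteq> {} \<and> \<not> term \<and> x \<longlonglongrightarrow> proj F x0);
                   b = (F = {} \<and> \<not> term \<and> filterlim (\<lambda>n. norm (x n)) at_top sequentially);
                   c = (F = {} \<and> term)
               in (a \<or> b \<or> c) \<and> \<not> (a \<and> b) \<and> \<not> (a \<and> c) \<and> \<not> (b \<and> c)))"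
proof (intro conjI impI allI)
  fix \<epsilon> :: real and x0 and x :: "nat \<Rightarrow> 'a"
  assume Fne: "F \<noteq> {}"
    and h: "0 < \<epsilon> \<and> \<epsilon> \<le> 1 \<and> x 0 = x0 \<and> (\<forall>n. x (Suc n) = x n + (2 - \<epsilon>) *\<^sub>R (T n (x n) - x n))"
  show "\<exists>p\<in>F. weak_conv x p"
    using fejer[OF assms(3) assms(4) Fne, of \<epsilon> x] h by blast
next
  fix x0 and x :: "nat \<Rightarrow> 'a"
  assume h: "x 0 = x0 \<and>
            (\<forall>n. halfsp x0 (x n) \<inter> halfsp (x n) (T n (x n)) \<noteq> {}
                  \<longrightarrow> x (Suc n) = Qmap x0 (x n) (T n (x n)))"
  have H: "((\<exists>n. halfsp x0 (x n) \<inter> halfsp (x n) (T n (x n)) = {}) \<longrightarrow> F = {})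
       \<and> ((\<not>(\<exists>n. halfsp x0 (x n) \<inter> halfsp (x n) (T n (x n)) = {}) \<and> F \<noteq> {}) \<longrightarrow> x \<longlonglongrightarrow> proj F x0)
       \<and> ((\<not>(\<exists>n. halfsp x0 (x n) \<inter> halfsp (x n) (T n (x n)) = {}) \<and> F = {}) \<longrightarrow> filterlim (\<lambda>n. norm (x n)) at_top sequentially)"
    using haug[OF assms(3) assms(4) assms(1) assms(2), of x x0] h by simp
  show "let term = (\<exists>n. halfsp x0 (x n) \<inter> halfsp (x n) (T n (x n)) = {});
                   a = (F \<noteq> {} \<and> \<not> term \<and> x \<longlonglongrightarrow> proj F x0);
                   b = (F = {} \<and> \<not> term \<and> filterlim (\<lambda>n. norm (x n)) at_top sequentially);
                   c = (F = {} \<and> term)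
               in (a \<or> b \<or> c) \<and> \<not> (a \<and> b) \<and> \<not> (a \<and> c) \<and> \<not> (b \<and> c)"
    unfolding Let_def using H by blast
qed

end
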